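(* Fix $L>0$ and $t\ge0$, let Assumptions A1 and A2 hold, let $\sigma_h$ satisfy A3(a) and $\nu_0$ satisfy A3(b), and suppose the weights $W=W(t)$ satisfy the full-support condition $$\mathrm{supp}\big(W_{xh}(\theta),W_{hh}(\cdot,\theta),W_{hh}(\theta,\cdot)\big)=\mathbb R^d\times L_R^\infty(P_{hh})\times L_R^\infty(P_{hh}).$$ Then the linear span of $\{\mathbf x\mapsto\sigma_h(H_{hh}(\theta;\mathbf x,0)+W_{xh}(\theta)\cdot\mathbf x_0):\theta\in\mathrm{supp}(P_{hh})\}$ is dense in $L^2(\nu_{L,0})$.
   Context: Assumption A1: $\mathbf x=(\mathbf x_k)_{k\in\mathbb Z}$, $\mathbf x_k\in\mathbb R^d$, with $\mathbf x_{k+1}=T(\mathbf x_k)$ for a continuous $T:\mathbb R^d\to\mathbb R^d$ which (possibly restricted to a forward-invariant set) is uniquely ergodic with invariant measure $\nu_0$ having finite fourth moments; $\nu$ is the induced invariant law on sequences and $\nu_{L,0}$ its marginal on the coordinates $(\mathbf x_{-L},\dots,\mathbf x_0)$. Assumption A2: the target depends only on $\mathbf x_{-L},\dots,\mathbf x_0$. Mean-field hidden states: $(\Omega_h,P_{hh})$ a probability space, weights $W_{xh}(\theta)\in\mathbb R^d$, $W_{hh}(\theta,\theta')\in\mathbb R$; $H_{hh}(\theta;\mathbf x,L)\equiv0$, $H_{hh}(\theta;\mathbf x,k)=\int W_{hh}(\theta,\theta')\sigma_h(H_{hh}(\theta';\mathbf x,k+1)+W_{xh}(\theta')\cdot\mathbf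 x_{-(k+1)})P_{hh}(d\theta')$ for $k=L-1,\dots,0$. $L^\infty_R(P_{hh})=\{f\in L^2(P_{hh}):\sup|f|\le R\}$ for a fixed $R>0$; $W_{hh}(\cdot,\theta)$ denotes $\theta'\mapsto W_{hh}(\theta',\theta)$; the support is that of the law of $\theta\mapsto(W_{xh}(\theta),W_{hh}(\cdot,\theta),W_{hh}(\theta,\cdot))$ under $P_{hh}$. A3(a): for some $K>R$, $\sigma_h$ is bounded, differentiable, $\sigma_h(0)=0$, $\sigma_h'(0)\ne0$, $\sigma_h'$ $K$-bounded and $K$-Lipschitz. A3(b): $\mathrm{span}\{\sigma_h(w\cdot\mathbf x_0):w\in\mathbb R^d\}$ is dense in $L^2(\nu_0)$. *)

theory Defs
  imports "HOL-Probability.Probability"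
begin

text \<open>Windows of a sequence: a window is a function w on {0..L} with w k = x_{-k}.\<close>

text \<open>The measure nu_{L,0}: law of (x_{-L},...,x_0) under the stationary law nu, where
  x_{-L} has law nu0 and x_{-k} = T^(L-k) x_{-L}.\<close>
definition nu_L0 :: "'a::euclidean_space measure \<Rightarrow> ('a \<Rightarrow> 'a) \<Rightarrow> nat \<Rightarrow> (nat \<Rightarrow> 'a) measure" where
  "nu_L0 nu0 T L = distr nu0 (PiM {0..L} (\<lambda>_. borel)) (\<lambda>y. \<lambda>k\<in>{0..L}. (T ^^ (L - k)) y)"

definition uniquely_ergodic :: "('a::euclidean_space \<Rightarrow> 'a) \<Rightarrow> 'a measure \<Rightarrow> bool" where
  "uniquely_ergodic T nu0 \<longleftrightarrow>
     (\<exists>S \<in> sets borel. T ` S \<subseteq> S \<and> emeasure nu0 S = 1 \<and>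
        distr nu0 borel T = nu0 \<and>
        (\<forall>\<mu>. prob_space \<mu> \<and> sets \<mu> = sets borel \<and> emeasure \<mu> S = 1 \<and> distr \<mu> borel T = \<mu>
              \<longrightarrow> \<mu> = nu0))"

definition L2_fun :: "'b measure \<Rightarrow> ('b \<Rightarrow> real) set" where
  "L2_fun M = {f. f \<in> borel_measurable M \<and> integrable M (\<lambda>x. (f x)\<^sup>2)}"

definition L2_dist :: "'b measure \<Rightarrow> ('b \<Rightarrow> real) \<Rightarrow> ('b \<Rightarrow> real) \<Rightarrow> real" where
  "L2_dist M f g = sqrt (\<integral>x. (f x - g x)\<^sup>2 \<partial>M)"

definition span_dense_L2 :: "'b measure \<Rightarrow> ('b \<Rightarrow> real) set \<Rightarrow> bool" where
  "span_dense_L2 M F \<longleftrightarrow> F \<subseteq> L2_fun M \<and>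
     (\<forall>f \<in> L2_fun M. \<forall>\<epsilon>>0. \<exists>n::nat. \<exists>c::nat \<Rightarrow> real. \<exists>g::nat \<Rightarrow> 'b \<Rightarrow> real.
        (\<forall>i<n. g i \<in> F) \<and>
        L2_dist M f (\<lambda>x. \<Sum>i<n. c i * g i x) < \<epsilon>)"

text \<open>Mean-field hidden states, computed backwards: Hrec n is H_hh(.;x,L-n).\<close>
primrec Hrec :: "'b measure \<Rightarrow> ('b \<Rightarrow> 'a::euclidean_space) \<Rightarrow> ('b \<Rightarrow> 'b \<Rightarrow> real) \<Rightarrow> (real \<Rightarrow> real)
                 \<Rightarrow> nat \<Rightarrow> (nat \<Rightarrow> 'a) \<Rightarrow> nat \<Rightarrow> 'b \<Rightarrow> real" where
  "Hrec P Wxh Whh \<sigma> L x 0 \<theta> = 0"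
| "Hrec P Wxh Whh \<sigma> L x (Suc n) \<theta> =
     (\<integral>\<theta>'. Whh \<theta> \<theta>' * \<sigma> (Hrec P Wxh Whh \<sigma> L x n \<theta>' + Wxh \<theta>' \<bullet> x (L - n)) \<partial>P)"

definition H_hh :: "'b measure \<Rightarrow> ('b \<Rightarrow> 'a::euclidean_space) \<Rightarrow> ('b \<Rightarrow> 'b \<Rightarrow> real) \<Rightarrow> (real \<Rightarrow> real)
                 \<Rightarrow> nat \<Rightarrow> (nat \<Rightarrow> 'a) \<Rightarrow> nat \<Rightarrow> 'b \<Rightarrow> real" where
  "H_hh P Wxh Whh \<sigma> L x k \<theta> = Hrec P Wxh Whh \<sigma> L x (L - k) \<theta>"

definition A3a :: "real \<Rightarrow> (real \<Rightarrow> real) \<Rightarrow> bool" where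
  "A3a R \<sigma> \<longleftrightarrow> (\<exists>K>R. bounded (range \<sigma>) \<and> (\<forall>z. \<sigma> differentiable (at z)) \<and>
      \<sigma> 0 = 0 \<and> deriv \<sigma> 0 \<noteq> 0 \<and> (\<forall>z. \<bar>deriv \<sigma> z\<bar> \<le> K) \<and>
      (\<forall>y z. \<bar>deriv \<sigma> y - deriv \<sigma> z\<bar> \<le> K * \<bar>y - z\<bar>))"

definition A3b :: "(real \<Rightarrow> real) \<Rightarrow> 'a::euclidean_space measure \<Rightarrow> bool" where
  "A3b \<sigma> nu0 \<longleftrightarrow> span_dense_L2 nu0 {(\<lambda>x. \<sigma> (w \<bullet> x)) | w. True}"

text \<open>Full-support condition: the support of the law of
  theta |-> (Wxh theta, Whh(.,theta), Whh(theta,.)) on R^d x L^2(P) x L^2(P)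
  equals R^d x L^infty_R(P) x L^infty_R(P).  A point z belongs to the support iff
  every ball around z has positive probability.\<close>
definition full_support :: "real \<Rightarrow> 'b measure \<Rightarrow> ('b \<Rightarrow> 'a::euclidean_space) \<Rightarrow> ('b \<Rightarrow> 'b \<Rightarrow> real) \<Rightarrow> bool" where
  "full_support R P Wxh Whh \<longleftrightarrow>
     (\<forall>w f g. f \<in> L2_fun P \<and> g \<in> L2_fun P \<longrightarrow>
        ((\<forall>\<epsilon>>0. emeasure P {\<theta> \<in> space P. dist (Wxh \<theta>) w < \<epsilon> \<and>
                   L2_dist P (\<lambda>\<theta>'. Whh \<theta>' \<theta>) f < \<epsilon> \<and> L2_dist P (Whh \<theta>) g < \<epsilon>} > 0)
         \<longleftrightarrow> ((AE \<theta> in P. \<bar>f \<theta>\<bar> \<le> R) \<and> (AE \<theta> in P. \<bar>g \<theta>\<bar> \<le> R))))"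

end

theory Submission
  imports Defs
begin


lemma sig_lip:
  fixes \<sigma> :: "real \<Rightarrow> real"
  assumes d: "\<forall>z. \<sigma> differentiable (at z)" and k: "\<forall>z. \<bar>deriv \<sigma> z\<bar> \<le> K"
  shows "\<bar>\<sigma> a - \<sigma> b\<bar> \<le> K * \<bar>a - b\<bar>"
proof -
  have D: "\<And>x. DERIV \<sigma> x :> deriv \<sigma> x" using d DERIV_deriv_iff_real_differentiable by blast
  have *: "\<bar>\<sigma> a - \<sigma> b\<bar> \<le> K * \<bar>a - b\<bar>" if ab: "a < b" for a b
  proof -
    obtain z where "\<sigma> b - \<sigma> a = (b - a) * deriv \<sigma> z" using MVT2[OF ab, of \<sigma> "deriv \<sigma>"] D by blast
    then have "\<sigma> a - \<sigma> b = (a - b) * deriv \<sigma> z" by (simp add: algebra_simps)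
    then have "\<bar>\<sigma> a - \<sigma> b\<bar> = \<bar>b - a\<bar> * \<bar>deriv \<sigma> z\<bar>" by (simp add: abs_mult abs_minus_commute)
    also have "\<dots> \<le> \<bar>b - a\<bar> * K" using k by (simp add: mult_left_mono)
    finally show ?thesis by (simp add: abs_minus_commute mult.commute)
  qed
  show ?thesis
    by (cases a b rule: linorder_cases) (use *[of a b] *[of b a] in \<open>auto simp: abs_minus_commute\<close>)
qed

lemma sig_taylor:
  fixes \<sigma> :: "real \<Rightarrow> real"
  assumes d: "\<forall>z. \<sigma> differentiable (at z)" and s0: "\<sigma> 0 = 0"
    and l: "\<forall>y z. \<bar>deriv \<sigma> y - deriv \<sigma> z\<bar> \<le> K * \<bar>y - z\<bar>"
  shows "\<bar>\<sigma> z - deriv \<sigma> 0 * z\<bar> \<le> K * z\<^sup>2"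
proof -
  have D: "\<And>x. DERIV \<sigma> x :> deriv \<sigma> x" using d DERIV_deriv_iff_real_differentiable by blast
  have K0: "K \<ge> 0" using l[rule_format, of 1 0] abs_ge_zero[of "deriv \<sigma> 1 - deriv \<sigma> 0"] by simp
  consider "z = 0" | "z > 0" | "z < 0" by linarith
  then show ?thesis
  proof cases
    case 1 then show ?thesis using s0 by simp
  next
    case 2
    obtain x where x: "0 < x" "x < z" "\<sigma> z - \<sigma> 0 = (z - 0) * deriv \<sigma> x" using MVT2[OF 2, of \<sigma> "deriv \<sigma>"] D by blast
    have "\<bar>\<sigma> z - deriv \<sigma> 0 * z\<bar> = \<bar>z\<bar> * \<bar>deriv \<sigma> x - deriv \<sigma> 0\<bar>" proof -
      have "\<sigma> z - deriv \<sigma> 0 * z = z * (deriv \<sigma> x - deriv \<sigma> 0)" using x s0 by (simp add: algebra_simps)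
      then show ?thesis by (simp add: abs_mult)
    qed
    also have "\<dots> \<le> \<bar>z\<bar> * (K * \<bar>x - 0\<bar>)" using l[rule_format, of x 0] by (intro mult_left_mono) auto
    also have "\<dots> \<le> \<bar>z\<bar> * (K * \<bar>z\<bar>)" using x K0
      by (intro mult_left_mono) auto
    also have "\<dots> = K * z\<^sup>2" by (metis abs_mult_self_eq mult.left_commute power2_eq_square)
    finally show ?thesis .
  next
    case 3
    obtain x where x: "z < x" "x < 0" "\<sigma> 0 - \<sigma> z = (0 - z) * deriv \<sigma> x" using MVT2[OF 3, of \<sigma> "deriv \<sigma>"] D by blast
    have "\<bar>\<sigma> z - deriv \<sigma> 0 * z\<bar> = \<bar>z\<bar> * \<bar>deriv \<sigma> x - deriv \<sigma> 0\<bar>"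
    proof -
      have "\<sigma> z - deriv \<sigma> 0 * z = z * (deriv \<sigma> x - deriv \<sigma> 0)" using x s0 by (simp add: algebra_simps)
      then show ?thesis by (simp add: abs_mult)
    qed
    also have "\<dots> \<le> \<bar>z\<bar> * (K * \<bar>x - 0\<bar>)" using l[rule_format, of x 0] by (intro mult_left_mono) auto
    also have "\<dots> \<le> \<bar>z\<bar> * (K * \<bar>z\<bar>)" using x K0
      by (intro mult_left_mono) auto
    also have "\<dots> = K * z\<^sup>2" by (metis abs_mult_self_eq mult.left_commute power2_eq_square)
    finally show ?thesis .
  qed
qed



lemmas Bint_add = Bochner_Integration.integrable_add
lemmas Bintegral_add = Bochner_Integration.integral_add
lemmas Bintegral_mono = Bochner_Integration.integral_mono
lemmas Bintegral_mult_right = Bochner_Integration.integral_mult_right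


definition D2 :: "'b measure \<Rightarrow> ('b \<Rightarrow> real) \<Rightarrow> ('b \<Rightarrow> real) \<Rightarrow> real" where
  "D2 M f g = (\<integral>x. (f x - g x)\<^sup>2 \<partial>M)"

inductive_set lsp :: "('b \<Rightarrow> real) set \<Rightarrow> ('b \<Rightarrow> real) set" for F where
  lsp0: "(\<lambda>x. 0) \<in> lsp F"
| lspS: "g \<in> F \<Longrightarrow> h \<in> lsp F \<Longrightarrow> (\<lambda>x. c * g x + h x) \<in> lsp F"

definition approx :: "'b measure \<Rightarrow> ('b \<Rightarrow> real) set \<Rightarrow> ('b \<Rightarrow> real) \<Rightarrow> bool" where
  "approx M F f \<longleftrightarrow> (\<forall>\<epsilon>>0. \<exists>\<phi>\<in>lsp F. D2 M f \<phi> < \<epsilon>)"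

lemma sq_sum_le: "((a::real) + b)\<^sup>2 \<le> 2 * a\<^sup>2 + 2 * b\<^sup>2"
  by (smt (verit) power2_diff power2_sum zero_le_power2)

lemma L2_zero: "(\<lambda>x. 0) \<in> L2_fun M"
  by (simp add: L2_fun_def)

lemma L2_comb:
  assumes "f \<in> L2_fun M" "g \<in> L2_fun M"
  shows "(\<lambda>x. c * f x + g x) \<in> L2_fun M"
proof -
  have m: "f \<in> borel_measurable M" "g \<in> borel_measurable M"
    and i: "integrable M (\<lambda>x. (f x)\<^sup>2)" "integrable M (\<lambda>x. (g x)\<^sup>2)"
    using assms by (auto simp: L2_fun_def)
  have "integrable M (\<lambda>x. (c * f x + g x)\<^sup>2)"
  proof (rule Bochner_Integration.integrable_bound)
    show "integrable M (\<lambda>x. 2 * c\<^sup>2 * (f x)\<^sup>2 + 2 * (g x)\<^sup>2)"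
      using i by (intro Bint_add integrable_mult_right) 
    show "(\<lambda>x. (c * f x + g x)\<^sup>2) \<in> borel_measurable M" using m by measurable
    show "AE x in M. norm ((c * f x + g x)\<^sup>2) \<le> norm (2 * c\<^sup>2 * (f x)\<^sup>2 + 2 * (g x)\<^sup>2)"
    proof (intro AE_I2)
      fix x
      have "(c * f x + g x)\<^sup>2 \<le> 2 * (c * f x)\<^sup>2 + 2 * (g x)\<^sup>2" by (rule sq_sum_le)
      then show "norm ((c * f x + g x)\<^sup>2) \<le> norm (2 * c\<^sup>2 * (f x)\<^sup>2 + 2 * (g x)\<^sup>2)"
        by (simp add: power_mult_distrib)
    qed
  qed
  then show ?thesis using m by (auto simp: L2_fun_def)
qed

lemma L2_diff_int:
  assumes "f \<in> L2_fun M" "g \<in> L2_fun M"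
  shows "integrable M (\<lambda>x. (f x - g x)\<^sup>2)"
  using L2_comb[OF assms(2,1), of "-1"] by (simp add: L2_fun_def)

lemma lsp_L2: assumes "F \<subseteq> L2_fun M" shows "\<phi> \<in> lsp F \<Longrightarrow> \<phi> \<in> L2_fun M"
  by (induction rule: lsp.induct) (use assms in \<open>auto intro: L2_zero L2_comb\<close>)

lemma lsp_comb: "a \<in> lsp F \<Longrightarrow> b \<in> lsp F \<Longrightarrow> (\<lambda>x. c * a x + b x) \<in> lsp F"
proof (induction a rule: lsp.induct)
  case lsp0 then show ?case by simp
next
  case (lspS g h d)
  have "(\<lambda>x. (c * d) * g x + (c * h x + b x)) \<in> lsp F" by (rule lsp.lspS[OF lspS(1) lspS(3)[OF lspS(4)]])
  then show ?case by (simp add: algebra_simps)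
qed

lemma lsp_base: assumes "g \<in> F" shows "g \<in> lsp F"
proof -
  have "(\<lambda>x. 1 * g x + 0) \<in> lsp F" by (rule lsp.lspS[OF assms lsp.lsp0])
  then show ?thesis by simp
qed

lemma lsp_sum: "\<phi> \<in> lsp F \<Longrightarrow> \<exists>(n::nat) c g. (\<forall>i<n. g i \<in> F) \<and> \<phi> = (\<lambda>x. \<Sum>i<n. c i * g i x)"
proof (induction rule: lsp.induct)
  case lsp0
  have "(\<forall>i<(0::nat). (\<lambda>i x. 0) i \<in> F) \<and> (\<lambda>x::'b. 0::real) = (\<lambda>x. \<Sum>i<(0::nat). (\<lambda>i. 0) i * (\<lambda>i x. 0) i x)" by simp
  then show ?case apply (intro exI[of _ "0::nat"]) apply (intro exI[of _ "\<lambda>i. 0"]) apply (intro exI[of _ "\<lambda>i x. 0"]) by simp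
next
  case (lspS g0 h c0)
  then obtain n :: nat and c g where h: "\<forall>i<n. g i \<in> F" "h = (\<lambda>x. \<Sum>i<n. c i * g i x)" by blast
  show ?case
    apply (rule exI[of _ "Suc n"], rule exI[of _ "c(n := c0)"], rule exI[of _ "g(n := g0)"])
    using h lspS by (auto simp: less_Suc_eq)
qed

lemma D2_nonneg: "D2 M f g \<ge> 0"
  unfolding D2_def by (intro integral_nonneg_AE) auto

lemma D2_tri:
  assumes "f \<in> L2_fun M" "g \<in> L2_fun M" "h \<in> L2_fun M"
  shows "D2 M f h \<le> 2 * D2 M f g + 2 * D2 M g h"
proof -
  have "D2 M f h \<le> (\<integral>x. 2 * (f x - g x)\<^sup>2 + 2 * (g x - h x)\<^sup>2 \<partial>M)"
    unfolding D2_def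
  proof (intro Bintegral_mono)
    fix x
    show "(f x - h x)\<^sup>2 \<le> 2 * (f x - g x)\<^sup>2 + 2 * (g x - h x)\<^sup>2" using sq_sum_le[of "f x - g x" "g x - h x"] by simp
  qed (use assms in \<open>auto intro!: Bint_add integrable_mult_right L2_diff_int\<close>)
  also have "\<dots> = 2 * D2 M f g + 2 * D2 M g h"
    unfolding D2_def using assms by (subst Bintegral_add) (auto intro!: integrable_mult_right L2_diff_int)
  finally show ?thesis .
qed

lemma D2_comb:
  assumes "a \<in> L2_fun M" "a' \<in> L2_fun M" "b \<in> L2_fun M" "b' \<in> L2_fun M"
  shows "D2 M (\<lambda>x. c * a x + b x) (\<lambda>x. c * a' x + b' x) \<le> 2 * c\<^sup>2 * D2 M a a' + 2 * D2 M b b'"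
proof -
  have e: "\<And>x. (c * a x + b x) - (c * a' x + b' x) = c * (a x - a' x) + (b x - b' x)" by (simp add: algebra_simps)
  have "D2 M (\<lambda>x. c * a x + b x) (\<lambda>x. c * a' x + b' x) \<le> (\<integral>x. 2 * c\<^sup>2 * (a x - a' x)\<^sup>2 + 2 * (b x - b' x)\<^sup>2 \<partial>M)"
    unfolding D2_def e
  proof (intro Bintegral_mono)
    fix x
    show "(c * (a x - a' x) + (b x - b' x))\<^sup>2 \<le> 2 * c\<^sup>2 * (a x - a' x)\<^sup>2 + 2 * (b x - b' x)\<^sup>2"
      using sq_sum_le[of "c * (a x - a' x)" "b x - b' x"] by (simp add: power_mult_distrib)
    show "integrable M (\<lambda>x. (c * (a x - a' x) + (b x - b' x))\<^sup>2)"
      using L2_diff_int[OF L2_comb[OF assms(1,3)] L2_comb[OF assms(2,4)], of c c] by (simp add: e)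
  qed (use assms in \<open>auto intro!: Bint_add integrable_mult_right L2_diff_int\<close>)
  also have "\<dots> = 2 * c\<^sup>2 * D2 M a a' + 2 * D2 M b b'"
    unfolding D2_def using assms by (subst Bintegral_add) (auto intro!: integrable_mult_right L2_diff_int)
  finally show ?thesis .
qed

lemma approx_comb:
  assumes G: "G \<subseteq> L2_fun M" and a: "a \<in> L2_fun M" "approx M G a" and b: "b \<in> L2_fun M" "approx M G b"
  shows "approx M G (\<lambda>x. c * a x + b x)"
  unfolding approx_def
proof (intro allI impI)
  fix \<epsilon> :: real assume e: "\<epsilon> > 0"
  obtain \<phi>a where pa: "\<phi>a \<in> lsp G" "D2 M a \<phi>a < \<epsilon> / (4 * (c\<^sup>2 + 1))"
    using a(2) e unfolding approx_def by (metis divide_pos_pos mult_pos_pos zero_less_numeral add_nonneg_pos zero_le_power2 zero_less_one)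
  obtain \<phi>b where pb: "\<phi>b \<in> lsp G" "D2 M b \<phi>b < \<epsilon> / 4"
    using b(2) e unfolding approx_def by (metis divide_pos_pos zero_less_numeral)
  have "D2 M (\<lambda>x. c * a x + b x) (\<lambda>x. c * \<phi>a x + \<phi>b x) \<le> 2 * c\<^sup>2 * D2 M a \<phi>a + 2 * D2 M b \<phi>b"
    using a b pa pb G by (intro D2_comb) (auto intro: lsp_L2)
  also have "2 * c\<^sup>2 * D2 M a \<phi>a \<le> 2 * c\<^sup>2 * (\<epsilon> / (4 * (c\<^sup>2 + 1)))"
    using pa by (intro mult_left_mono) auto
  also have "2 * c\<^sup>2 * (\<epsilon> / (4 * (c\<^sup>2 + 1))) \<le> \<epsilon> / 2"
  proof -
    have c1: "c\<^sup>2 + 1 > 0" by (simp add: add_nonneg_pos)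
    have "2 * c\<^sup>2 * (\<epsilon> / (4 * (c\<^sup>2 + 1))) = \<epsilon> / 2 * (c\<^sup>2 / (c\<^sup>2 + 1))" using c1 by (simp add: field_simps)
    also have "\<dots> \<le> \<epsilon> / 2 * 1" using e c1 by (intro mult_left_mono) auto
    finally show ?thesis by simp
  qed
  finally have "D2 M (\<lambda>x. c * a x + b x) (\<lambda>x. c * \<phi>a x + \<phi>b x) < \<epsilon>" using pb by linarith
  moreover have "(\<lambda>x. c * \<phi>a x + \<phi>b x) \<in> lsp G" using pa pb by (intro lsp_comb)
  ultimately show "\<exists>\<phi>\<in>lsp G. D2 M (\<lambda>x. c * a x + b x) \<phi> < \<epsilon>" by blast
qed

lemma approx_lsp:
  assumes F: "F \<subseteq> L2_fun M" and G: "G \<subseteq> L2_fun M" and FG: "\<forall>\<phi>\<in>F. approx M G \<phi>"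
  shows "\<phi> \<in> lsp F \<Longrightarrow> approx M G \<phi>"
proof (induction rule: lsp.induct)
  case lsp0
  have "D2 M (\<lambda>x. 0) (\<lambda>x. 0) = 0" by (simp add: D2_def)
  show ?case unfolding approx_def
  proof (intro allI impI)
    fix \<epsilon> :: real assume "\<epsilon> > 0"
    then show "\<exists>\<phi>\<in>lsp G. D2 M (\<lambda>x. 0) \<phi> < \<epsilon>"
      apply (intro bexI[of _ "\<lambda>x. 0"])
      apply (simp add: D2_def)
      by (rule lsp.lsp0)
  qed
next
  case (lspS g h c)
  then show ?case using FG F G lsp_L2[OF F] by (intro approx_comb) auto
qed

lemma approx_trans:
  assumes f: "f \<in> L2_fun M" and F: "F \<subseteq> L2_fun M" and G: "G \<subseteq> L2_fun M"
    and fF: "approx M F f" and FG: "\<forall>\<phi>\<in>F. approx M G \<phi>"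
  shows "approx M G f"
  unfolding approx_def
proof (intro allI impI)
  fix \<epsilon> :: real assume e: "\<epsilon> > 0"
  obtain \<phi> where p: "\<phi> \<in> lsp F" "D2 M f \<phi> < \<epsilon> / 4" using fF e unfolding approx_def by (metis divide_pos_pos zero_less_numeral)
  have "approx M G \<phi>" using approx_lsp[OF F G FG p(1)] .
  then obtain \<psi> where q: "\<psi> \<in> lsp G" "D2 M \<phi> \<psi> < \<epsilon> / 4" using e unfolding approx_def by (metis divide_pos_pos zero_less_numeral)
  have "D2 M f \<psi> \<le> 2 * D2 M f \<phi> + 2 * D2 M \<phi> \<psi>"
    using f p q F G by (intro D2_tri) (auto intro: lsp_L2)
  then have "D2 M f \<psi> < \<epsilon>" using p q by linarith
  then show "\<exists>\<psi>\<in>lsp G. D2 M f \<psi> < \<epsilon>" using q by blast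
qed



locale rnn = N: prob_space nu0 + Q: prob_space P
  for nu0 :: "'a::euclidean_space measure" and P :: "'b measure" +
  fixes L :: nat and R K B :: real and T :: "'a \<Rightarrow> 'a" and Wxh :: "'b \<Rightarrow> 'a"
    and Whh :: "'b \<Rightarrow> 'b \<Rightarrow> real" and \<sigma> :: "real \<Rightarrow> real"
  assumes Rpos: "R > 0" and KR: "K > R" and Bpos: "B > 0" and \<sigma>B: "\<And>z. \<bar>\<sigma> z\<bar> \<le> B"
    and \<sigma>d: "\<forall>z. \<sigma> differentiable (at z)" and \<sigma>0: "\<sigma> 0 = 0" and d0: "deriv \<sigma> 0 \<noteq> 0"
    and dK: "\<forall>z. \<bar>deriv \<sigma> z\<bar> \<le> K" and dL: "\<forall>y z. \<bar>deriv \<sigma> y - deriv \<sigma> z\<bar> \<le> K * \<bar>y - z\<bar>"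
    and sets_nu0: "sets nu0 = sets borel" and Tm: "T \<in> borel_measurable borel"
    and Tinv: "distr nu0 borel T = nu0"
    and mom: "integrable nu0 (\<lambda>x. norm x ^ 2)"
    and Wxhm: "Wxh \<in> borel_measurable P"
    and Whhm: "(\<lambda>(\<theta>, \<theta>'). Whh \<theta> \<theta>') \<in> borel_measurable (P \<Otimes>\<^sub>M P)"
    and WL2: "\<forall>\<theta> \<in> space P. (\<lambda>\<theta>'. Whh \<theta>' \<theta>) \<in> L2_fun P \<and> Whh \<theta> \<in> L2_fun P"
    and FS: "full_support R P Wxh Whh" and A3: "A3b \<sigma> nu0"
begin

definition "Phi y = (\<lambda>k\<in>{0..L}. (T ^^ (L - k)) y)"
definition "G n \<theta> y = \<sigma> (Hrec P Wxh Whh \<sigma> L (Phi y) n \<theta> + Wxh \<theta> \<bullet> Phi y (L - n))"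
definition "I n g y = (case n of 0 \<Rightarrow> 0 | Suc m \<Rightarrow> \<integral>\<theta>. g \<theta> * G m \<theta> y \<partial>P)"
definition "Gh n w g y = \<sigma> (I n g y + w \<bullet> Phi y (L - n))"

lemma G_Gh: "G n \<theta> y = Gh n (Wxh \<theta>) (Whh \<theta>) y"
  by (cases n) (simp_all add: G_def Gh_def I_def)

lemma Phi_X: "Phi y (L - n) = (T ^^ (L - (L - n))) y"
  by (simp add: Phi_def)

lemma \<sigma>m[measurable]: "\<sigma> \<in> borel_measurable borel"
  using \<sigma>d by (intro borel_measurable_continuous_onI continuous_at_imp_continuous_on)
    (simp add: differentiable_imp_continuous_within)

lemma Tpow_m[measurable]: "(T ^^ k) \<in> borel_measurable borel"
proof (induction k)
  case (Suc k) then show ?case using measurable_compose[OF Suc Tm] by simp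
qed simp

lemma Phi_m[measurable]: "Phi \<in> measurable nu0 (PiM {0..L} (\<lambda>_. borel))"
  unfolding Phi_def by (subst measurable_cong_sets[OF sets_nu0 refl]) measurable

lemmas Whhm'[measurable] = Whhm
lemmas Wxhm'[measurable] = Wxhm

lemma Hrec_m[measurable]:
  "(\<lambda>(x, \<theta>). Hrec P Wxh Whh \<sigma> L x n \<theta>) \<in> borel_measurable (PiM {0..L} (\<lambda>_. borel) \<Otimes>\<^sub>M P)"
proof (induction n)
  case 0 then show ?case by simp
next
  case (Suc n)
  note [measurable] = Suc
  show ?case by simp measurable
qed

lemma G_joint[measurable]: "(\<lambda>(y, \<theta>). G n \<theta> y) \<in> borel_measurable (nu0 \<Otimes>\<^sub>M P)"
  unfolding G_def by measurable

lemma G_m1[measurable]: "\<theta> \<in> space P \<Longrightarrow> G n \<theta> \<in> borel_measurable nu0"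
  unfolding G_def by measurable

lemma G_m2[measurable]: "y \<in> space nu0 \<Longrightarrow> (\<lambda>\<theta>. G n \<theta> y) \<in> borel_measurable P"
  unfolding G_def by measurable

lemma I_m[measurable]: "g \<in> borel_measurable P \<Longrightarrow> I n g \<in> borel_measurable nu0"
proof (cases n)
  case 0
  have "I 0 g = (\<lambda>y. 0)" by (simp add: I_def fun_eq_iff)
  then show ?thesis using 0 by simp
next
  case (Suc m)
  assume [measurable]: "g \<in> borel_measurable P"
  have "(\<lambda>y. \<integral>\<theta>. g \<theta> * G m \<theta> y \<partial>P) \<in> borel_measurable nu0"
    by (rule Q.borel_measurable_lebesgue_integral) measurable
  moreover have "I (Suc m) g = (\<lambda>y. \<integral>\<theta>. g \<theta> * G m \<theta> y \<partial>P)" by (simp add: I_def fun_eq_iff)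
  ultimately show ?thesis using Suc by simp
qed

lemma X_m[measurable]: "(\<lambda>y. Phi y (L - n)) \<in> borel_measurable nu0"
  unfolding Phi_X by (subst measurable_cong_sets[OF sets_nu0 refl]) measurable

lemma Gh_m[measurable]: "g \<in> borel_measurable P \<Longrightarrow> Gh n w g \<in> borel_measurable nu0"
proof -
  assume [measurable]: "g \<in> borel_measurable P"
  have [measurable]: "(\<lambda>y. w \<bullet> Phi y (L - n)) \<in> borel_measurable nu0"
    by (rule borel_measurable_inner[OF measurable_const X_m]) simp
  show ?thesis unfolding Gh_def by measurable
qed

lemma G_bound: "\<bar>G n \<theta> y\<bar> \<le> B" by (simp add: G_def \<sigma>B)
lemma Gh_bound: "\<bar>Gh n w g y\<bar> \<le> B" by (simp add: Gh_def \<sigma>B)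

lemma bounded_L2:
  assumes "f \<in> borel_measurable nu0" "\<And>y. \<bar>f y\<bar> \<le> B"
  shows "f \<in> L2_fun nu0"
proof -
  have "\<And>y. (f y)\<^sup>2 \<le> B\<^sup>2" using assms(2) by (metis abs_le_square_iff abs_of_pos Bpos power2_abs)
  then have "integrable nu0 (\<lambda>y. (f y)\<^sup>2)"
    using assms(1) by (intro N.integrable_const_bound[where B="B\<^sup>2"]) auto
  then show ?thesis using assms by (simp add: L2_fun_def)
qed

lemma L2_P_int: "h \<in> L2_fun P \<Longrightarrow> integrable P h"
proof -
  assume h: "h \<in> L2_fun P"
  show "integrable P h"
  proof (rule Bochner_Integration.integrable_bound)
    show "integrable P (\<lambda>x. 1 + (h x)\<^sup>2)" using h by (simp add: L2_fun_def)
    show "h \<in> borel_measurable P" using h by (simp add: L2_fun_def)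
    show "AE x in P. norm (h x) \<le> norm (1 + (h x)\<^sup>2)"
    proof (intro AE_I2)
      fix x
      have e: "(\<bar>h x\<bar> - 1)\<^sup>2 = (h x)\<^sup>2 - 2 * \<bar>h x\<bar> + 1" by (simp add: power2_diff power2_abs)
      have "0 \<le> (\<bar>h x\<bar> - 1)\<^sup>2" by simp
      then have "\<bar>h x\<bar> \<le> 1 + (h x)\<^sup>2" using e zero_le_power2[of "h x"] by linarith
      then show "norm (h x) \<le> norm (1 + (h x)\<^sup>2)" by simp
    qed
  qed
qed

lemma L1_L2: assumes "h \<in> L2_fun P" shows "(\<integral>x. \<bar>h x\<bar> \<partial>P)\<^sup>2 \<le> (\<integral>x. (h x)\<^sup>2 \<partial>P)"
proof -
  have i1: "integrable P (\<lambda>x. \<bar>h x\<bar>)" using L2_P_int[OF assms] by simp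
  have i2: "integrable P (\<lambda>x. \<bar>h x\<bar>\<^sup>2)" using assms by (simp add: L2_fun_def)
  have "0 \<le> Q.variance (\<lambda>x. \<bar>h x\<bar>)" by (rule Q.variance_positive)
  also have "\<dots> = (\<integral>x. \<bar>h x\<bar>\<^sup>2 \<partial>P) - (\<integral>x. \<bar>h x\<bar> \<partial>P)\<^sup>2" by (rule Q.variance_eq[OF i1 i2])
  finally show ?thesis by simp
qed

lemma abs_int_bound:
  fixes f g :: "'c \<Rightarrow> real"
  assumes "integrable M f" "integrable M g" "\<And>x. x \<in> space M \<Longrightarrow> \<bar>f x\<bar> \<le> g x"
  shows "\<bar>\<integral>x. f x \<partial>M\<bar> \<le> (\<integral>x. g x \<partial>M)"
proof -
  have "\<bar>\<integral>x. f x \<partial>M\<bar> \<le> (\<integral>x. norm (f x) \<partial>M)" using integral_norm_bound[of M f] by simp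
  also have "\<dots> \<le> (\<integral>x. g x \<partial>M)" using assms by (intro Bochner_Integration.integral_mono) auto
  finally show ?thesis .
qed

lemma mom_k: "integrable nu0 (\<lambda>y. (norm ((T ^^ k) y))\<^sup>2)"
proof (induction k)
  case 0 then show ?case using mom by simp
next
  case (Suc k)
  have Tm': "T \<in> measurable nu0 borel" using Tm by (simp add: measurable_cong_sets[OF sets_nu0 refl])
  have "integrable (distr nu0 borel T) (\<lambda>y. (norm ((T ^^ k) y))\<^sup>2)" using Suc Tinv by simp
  then have "integrable nu0 (\<lambda>y. (norm ((T ^^ k) (T y)))\<^sup>2)"
    by (subst integrable_distr_eq[symmetric, OF Tm']) auto
  then show ?case by (simp add: funpow_Suc_right del: funpow.simps)
qed

lemma mom_X: "integrable nu0 (\<lambda>y. (norm (Phi y (L - n)))\<^sup>2)"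
  using mom_k[of "L - (L - n)"] by (simp add: Phi_X)


definition "Ideal n = {Gh n w g | w g. g \<in> L2_fun P \<and> (AE \<theta> in P. \<bar>g \<theta>\<bar> \<le> R)}"
definition "Actual n = {G n \<theta> | \<theta>. \<theta> \<in> space P}"

lemma Ideal_L2: "Ideal n \<subseteq> L2_fun nu0"
proof
  fix f assume "f \<in> Ideal n"
  then obtain w g where f: "f = Gh n w g" and g: "g \<in> L2_fun P" unfolding Ideal_def by blast
  have "g \<in> borel_measurable P" using g by (simp add: L2_fun_def)
  then show "f \<in> L2_fun nu0" unfolding f by (intro bounded_L2 Gh_m Gh_bound)
qed

lemma Actual_L2: "Actual n \<subseteq> L2_fun nu0"
  unfolding Actual_def using G_bound by (auto intro!: bounded_L2)

lemma const_L2: "(\<lambda>y. a) \<in> L2_fun nu0"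
  by (simp add: L2_fun_def)

lemma E_L2: "(\<lambda>y. a + c * norm (Phi y (L - n))) \<in> L2_fun nu0"
proof -
  have "(\<lambda>y. norm (Phi y (L - n))) \<in> L2_fun nu0" using mom_X[of n] by (simp add: L2_fun_def)
  from L2_comb[OF this const_L2, of c a] show ?thesis by (simp add: add.commute)
qed

lemma D2_le:
  assumes "f \<in> L2_fun nu0" "g \<in> L2_fun nu0" "E \<in> L2_fun nu0"
    and "\<And>y. y \<in> space nu0 \<Longrightarrow> \<bar>f y - g y\<bar> \<le> \<delta> * E y"
  shows "D2 nu0 f g \<le> \<delta>\<^sup>2 * (\<integral>y. (E y)\<^sup>2 \<partial>nu0)"
proof -
  have "D2 nu0 f g \<le> (\<integral>y. \<delta>\<^sup>2 * (E y)\<^sup>2 \<partial>nu0)"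
    unfolding D2_def
  proof (rule Bochner_Integration.integral_mono)
    show "integrable nu0 (\<lambda>x. (f x - g x)\<^sup>2)" using assms by (intro L2_diff_int)
    show "integrable nu0 (\<lambda>x. \<delta>\<^sup>2 * (E x)\<^sup>2)" using assms(3) by (simp add: L2_fun_def)
    fix y assume y: "y \<in> space nu0"
    have "\<bar>f y - g y\<bar> \<le> \<bar>\<delta> * E y\<bar>" using assms(4)[OF y] by linarith
    then have "(f y - g y)\<^sup>2 \<le> (\<delta> * E y)\<^sup>2" by (simp add: abs_le_square_iff)
    then show "(f y - g y)\<^sup>2 \<le> \<delta>\<^sup>2 * (E y)\<^sup>2" by (simp add: power_mult_distrib)
  qed
  also have "\<dots> = \<delta>\<^sup>2 * (\<integral>y. (E y)\<^sup>2 \<partial>nu0)" by simp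
  finally show ?thesis .
qed

lemma choose_delta:
  assumes "C \<ge> 0" "\<epsilon> > (0::real)"
  shows "\<exists>\<delta>. 0 < \<delta> \<and> \<delta> \<le> 1 \<and> \<delta>\<^sup>2 * C < \<epsilon>"
proof -
  define \<delta> where "\<delta> = min 1 (\<epsilon> / (C + 1))"
  have d: "0 < \<delta>" "\<delta> \<le> 1" "\<delta> \<le> \<epsilon> / (C + 1)" using assms by (auto simp: \<delta>_def)
  have "\<delta>\<^sup>2 * C \<le> \<delta> * C" using d assms by (intro mult_right_mono) (auto simp: power2_eq_square mult_le_cancel_left1)
  also have "\<dots> \<le> \<epsilon> / (C + 1) * C" using d assms by (intro mult_right_mono) auto
  also have "\<dots> < \<epsilon>" using assms by (simp add: field_simps)
  finally show ?thesis using d by blast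
qed

lemma int_prod:
  assumes "h \<in> L2_fun P" "y \<in> space nu0"
  shows "integrable P (\<lambda>\<theta>. h \<theta> * G m \<theta> y)"
proof (rule Bochner_Integration.integrable_bound)
  show "integrable P (\<lambda>\<theta>. B * h \<theta>)" using L2_P_int[OF assms(1)] by simp
  show "(\<lambda>\<theta>. h \<theta> * G m \<theta> y) \<in> borel_measurable P"
    using assms G_m2[OF assms(2)] by (auto simp: L2_fun_def intro: borel_measurable_times)
  show "AE x in P. norm (h x * G m x y) \<le> norm (B * h x)"
  proof (intro AE_I2)
    fix x
    have "\<bar>h x\<bar> * \<bar>G m x y\<bar> \<le> \<bar>h x\<bar> * B" using G_bound by (intro mult_left_mono) auto
    then show "norm (h x * G m x y) \<le> norm (B * h x)" using Bpos by (simp add: abs_mult mult.commute)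
  qed
qed

lemma Kpos: "K > 0" using KR Rpos by linarith

lemma PW:
  assumes g0: "g0 \<in> L2_fun P" and th: "\<theta> \<in> space P"
    and dw: "dist (Wxh \<theta>) w0 < \<delta>" and dg: "L2_dist P (Whh \<theta>) g0 < \<delta>" and y: "y \<in> space nu0"
  shows "\<bar>G n \<theta> y - Gh n w0 g0 y\<bar> \<le> \<delta> * (K * B + K * norm (Phi y (L - n)))"
proof -
  have dpos: "\<delta> > 0" using dw zero_le_dist[of "Wxh \<theta>" w0] by linarith
  have Wth: "Whh \<theta> \<in> L2_fun P" using WL2 th by auto
  have Ib: "\<bar>I n (Whh \<theta>) y - I n g0 y\<bar> \<le> B * \<delta>"
  proof (cases n)
    case 0 then show ?thesis using Bpos dpos by (simp add: I_def)
  next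
    case (Suc m)
    define h where "h = (\<lambda>\<theta>'. Whh \<theta> \<theta>' - g0 \<theta>')"
    have hL2: "h \<in> L2_fun P" using L2_comb[OF g0 Wth, of "-1"] by (simp add: h_def)
    have "I n (Whh \<theta>) y - I n g0 y = (\<integral>\<theta>'. h \<theta>' * G m \<theta>' y \<partial>P)"
      using Suc int_prod[OF Wth y, of m] int_prod[OF g0 y, of m]
      by (simp add: I_def h_def left_diff_distrib Bochner_Integration.integral_diff)
    also have "\<bar>\<dots>\<bar> \<le> (\<integral>\<theta>'. B * \<bar>h \<theta>'\<bar> \<partial>P)"
    proof (rule abs_int_bound)
      show "integrable P (\<lambda>\<theta>'. h \<theta>' * G m \<theta>' y)" by (rule int_prod[OF hL2 y])
      show "integrable P (\<lambda>\<theta>'. B * \<bar>h \<theta>'\<bar>)" using L2_P_int[OF hL2] by simp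
      fix x
      have "\<bar>h x\<bar> * \<bar>G m x y\<bar> \<le> \<bar>h x\<bar> * B" using G_bound by (intro mult_left_mono) auto
      then show "\<bar>h x * G m x y\<bar> \<le> B * \<bar>h x\<bar>" by (simp add: abs_mult mult.commute)
    qed
    also have "\<dots> = B * (\<integral>\<theta>'. \<bar>h \<theta>'\<bar> \<partial>P)" by simp
    also have "\<dots> \<le> B * \<delta>"
    proof (rule mult_left_mono)
      have "(\<integral>\<theta>'. \<bar>h \<theta>'\<bar> \<partial>P) \<le> sqrt (\<integral>\<theta>'. (h \<theta>')\<^sup>2 \<partial>P)"
        using L1_L2[OF hL2] real_le_rsqrt by blast
      also have "\<dots> = L2_dist P (Whh \<theta>) g0" by (simp add: L2_dist_def h_def)
      finally show "(\<integral>\<theta>'. \<bar>h \<theta>'\<bar> \<partial>P) \<le> \<delta>" using dg by linarith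
    qed (use Bpos in auto)
    finally show ?thesis .
  qed
  have Xb: "\<bar>(Wxh \<theta> - w0) \<bullet> Phi y (L - n)\<bar> \<le> \<delta> * norm (Phi y (L - n))"
  proof -
    have "\<bar>(Wxh \<theta> - w0) \<bullet> Phi y (L - n)\<bar> \<le> norm (Wxh \<theta> - w0) * norm (Phi y (L - n))" by (rule Cauchy_Schwarz_ineq2)
    also have "\<dots> \<le> \<delta> * norm (Phi y (L - n))" using dw by (intro mult_right_mono) (auto simp: dist_norm)
    finally show ?thesis .
  qed
  have "\<bar>G n \<theta> y - Gh n w0 g0 y\<bar> \<le> K * \<bar>(I n (Whh \<theta>) y + Wxh \<theta> \<bullet> Phi y (L - n)) - (I n g0 y + w0 \<bullet> Phi y (L - n))\<bar>"
    unfolding G_Gh Gh_def by (rule sig_lip[OF \<sigma>d dK])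
  also have "(I n (Whh \<theta>) y + Wxh \<theta> \<bullet> Phi y (L - n)) - (I n g0 y + w0 \<bullet> Phi y (L - n))
      = (I n (Whh \<theta>) y - I n g0 y) + (Wxh \<theta> - w0) \<bullet> Phi y (L - n)" by (simp add: inner_diff_left)
  also have "K * \<bar>\<dots>\<bar> \<le> K * (B * \<delta> + \<delta> * norm (Phi y (L - n)))"
    using Ib Xb Kpos by (intro mult_left_mono) auto
  also have "\<dots> = \<delta> * (K * B + K * norm (Phi y (L - n)))" by (simp add: algebra_simps)
  finally show ?thesis .
qed


lemma FS_pos:
  assumes g0: "g0 \<in> L2_fun P" "AE \<theta> in P. \<bar>g0 \<theta>\<bar> \<le> R" and d: "\<delta> > 0"
  shows "0 < emeasure P {\<theta> \<in> space P. dist (Wxh \<theta>) w0 < \<delta> \<and>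
            L2_dist P (\<lambda>\<theta>'. Whh \<theta>' \<theta>) (\<lambda>_. 0) < \<delta> \<and> L2_dist P (Whh \<theta>) g0 < \<delta>}"
proof -
  have "(\<forall>\<epsilon>>0. emeasure P {\<theta> \<in> space P. dist (Wxh \<theta>) w0 < \<epsilon> \<and>
                   L2_dist P (\<lambda>\<theta>'. Whh \<theta>' \<theta>) (\<lambda>_. 0) < \<epsilon> \<and> L2_dist P (Whh \<theta>) g0 < \<epsilon>} > 0)
         \<longleftrightarrow> ((AE \<theta> in P. \<bar>(\<lambda>_. 0::real) \<theta>\<bar> \<le> R) \<and> (AE \<theta> in P. \<bar>g0 \<theta>\<bar> \<le> R))"
    using FS g0(1) L2_zero unfolding full_support_def by blast
  moreover have "(AE \<theta> in P. \<bar>(\<lambda>_. 0::real) \<theta>\<bar> \<le> R)" using Rpos by simp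
  ultimately show ?thesis using g0(2) d by blast
qed

lemma AL:
  assumes g0: "g0 \<in> L2_fun P" "AE \<theta> in P. \<bar>g0 \<theta>\<bar> \<le> R"
  shows "approx nu0 (Actual n) (Gh n w0 g0)"
  unfolding approx_def
proof (intro allI impI)
  fix \<epsilon> :: real assume e: "\<epsilon> > 0"
  define E where "E = (\<lambda>y. K * B + K * norm (Phi y (L - n)))"
  have EL2: "E \<in> L2_fun nu0" unfolding E_def by (rule E_L2)
  have C0: "(\<integral>y. (E y)\<^sup>2 \<partial>nu0) \<ge> 0" by (intro integral_nonneg_AE) auto
  obtain \<delta> where d: "0 < \<delta>" "\<delta> \<le> 1" "\<delta>\<^sup>2 * (\<integral>y. (E y)\<^sup>2 \<partial>nu0) < \<epsilon>" using choose_delta[OF C0 e] by blast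
  let ?S = "{\<theta> \<in> space P. dist (Wxh \<theta>) w0 < \<delta> \<and>
            L2_dist P (\<lambda>\<theta>'. Whh \<theta>' \<theta>) (\<lambda>_. 0) < \<delta> \<and> L2_dist P (Whh \<theta>) g0 < \<delta>}"
  have "?S \<noteq> {}" using FS_pos[OF g0 d(1), of w0] by (metis emeasure_empty less_irrefl)
  then obtain \<theta> where th: "\<theta> \<in> ?S" by blast
  have Gin: "G n \<theta> \<in> Actual n" using th unfolding Actual_def by blast
  have g0m: "g0 \<in> borel_measurable P" using g0 by (simp add: L2_fun_def)
  have "D2 nu0 (Gh n w0 g0) (G n \<theta>) \<le> \<delta>\<^sup>2 * (\<integral>y. (E y)\<^sup>2 \<partial>nu0)"
  proof (rule D2_le)
    show "Gh n w0 g0 \<in> L2_fun nu0" by (intro bounded_L2 Gh_m[OF g0m] Gh_bound)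
    show "G n \<theta> \<in> L2_fun nu0" using Gin Actual_L2 by blast
    show "E \<in> L2_fun nu0" by (rule EL2)
    fix y assume y: "y \<in> space nu0"
    have "\<bar>G n \<theta> y - Gh n w0 g0 y\<bar> \<le> \<delta> * E y" unfolding E_def using th y by (intro PW[OF g0(1)]) auto
    then show "\<bar>Gh n w0 g0 y - G n \<theta> y\<bar> \<le> \<delta> * E y" by (simp add: abs_minus_commute)
  qed
  then have "D2 nu0 (Gh n w0 g0) (G n \<theta>) < \<epsilon>" using d by linarith
  then show "\<exists>\<phi>\<in>lsp (Actual n). D2 nu0 (Gh n w0 g0) \<phi> < \<epsilon>" using lsp_base[OF Gin] by blast
qed


lemma Step:
  assumes g0: "g0 \<in> L2_fun P" "AE \<theta> in P. \<bar>g0 \<theta>\<bar> \<le> R"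
  shows "approx nu0 (Ideal (Suc n)) (Gh n w0 g0)"
  unfolding approx_def
proof (intro allI impI)
  fix \<epsilon> :: real assume e: "\<epsilon> > 0"
  define d where "d = deriv \<sigma> 0"
  have dpos: "\<bar>d\<bar> > 0" using d0 by (simp add: d_def)
  define E0 where "E0 = (\<lambda>y. K * B + K * norm (Phi y (L - n)))"
  define E where "E = (\<lambda>y. (K * R * B\<^sup>2 / \<bar>d\<bar> + K * B) + K * norm (Phi y (L - n)))"
  have EL2: "E \<in> L2_fun nu0" unfolding E_def by (rule E_L2)
  have C0: "(\<integral>y. (E y)\<^sup>2 \<partial>nu0) \<ge> 0" by (intro integral_nonneg_AE) auto
  obtain \<delta> where dl: "0 < \<delta>" "\<delta> \<le> 1" "\<delta>\<^sup>2 * (\<integral>y. (E y)\<^sup>2 \<partial>nu0) < \<epsilon>" using choose_delta[OF C0 e] by blast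
  define S where "S = {\<theta> \<in> space P. dist (Wxh \<theta>) w0 < \<delta> \<and>
            L2_dist P (\<lambda>\<theta>'. Whh \<theta>' \<theta>) (\<lambda>_. 0) < \<delta> \<and> L2_dist P (Whh \<theta>) g0 < \<delta>}"
  have Spos: "0 < emeasure P S" unfolding S_def by (rule FS_pos[OF g0 dl(1)])
  then have Sm: "S \<in> sets P" using emeasure_notin_sets by fastforce
  define p where "p = measure P S"
  have ppos: "p > 0" using Spos Sm by (simp add: p_def Q.emeasure_eq_measure)
  have ple: "p \<le> 1" unfolding p_def by (rule Q.prob_le_1)
  have indL2: "indicator S \<in> L2_fun P"
  proof -
    have m: "(indicator S :: 'b \<Rightarrow> real) \<in> borel_measurable P" using Sm by simp
    have "integrable P (\<lambda>x. (indicator S x :: real)\<^sup>2)"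
      apply (intro Q.integrable_const_bound[where B=1])
       apply (simp add: indicator_def)
      using Sm by measurable
    then show ?thesis using m by (simp add: L2_fun_def)
  qed
  define g where "g = (\<lambda>\<theta>. \<delta> * R * indicator S \<theta>)"
  have gL2: "g \<in> L2_fun P" using L2_comb[OF indL2 L2_zero, of "\<delta> * R"] by (simp add: g_def)
  have gR: "AE \<theta> in P. \<bar>g \<theta>\<bar> \<le> R"
  proof (intro AE_I2)
    fix x
    have "\<bar>g x\<bar> \<le> \<delta> * R" using dl Rpos by (simp add: g_def indicator_def abs_mult)
    also have "\<dots> \<le> 1 * R" using dl Rpos by (intro mult_right_mono) auto
    finally show "\<bar>g x\<bar> \<le> R" by simp
  qed
  have Psi: "Gh (Suc n) 0 g \<in> Ideal (Suc n)" using gL2 gR unfolding Ideal_def by blast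
  define c where "c = 1 / (\<delta> * R * p * d)"
  define \<phi> where "\<phi> = (\<lambda>y. c * Gh (Suc n) 0 g y + 0)"
  have phin: "\<phi> \<in> lsp (Ideal (Suc n))" unfolding \<phi>_def by (rule lsp.lspS[OF Psi lsp.lsp0])
  have g0m: "g0 \<in> borel_measurable P" using g0 by (simp add: L2_fun_def)
  have fL2: "Gh n w0 g0 \<in> L2_fun nu0" by (intro bounded_L2 Gh_m[OF g0m] Gh_bound)
  have phiL2: "\<phi> \<in> L2_fun nu0" using lsp_L2[OF Ideal_L2 phin] .
  have pw: "\<bar>Gh n w0 g0 y - \<phi> y\<bar> \<le> \<delta> * E y" if y: "y \<in> space nu0" for y
  proof -
    define f where "f = Gh n w0 g0 y"
    define J where "J = (\<integral>\<theta>. indicator S \<theta> * G n \<theta> y \<partial>P)"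
    have iJ: "integrable P (\<lambda>\<theta>. indicator S \<theta> * G n \<theta> y)" by (rule int_prod[OF indL2 y])
    have intS: "(\<integral>\<theta>. indicator S \<theta> * a \<partial>P) = p * a" for a :: real
      using Sm by (simp add: p_def)
    have iS: "integrable P (\<lambda>\<theta>. indicator S \<theta> * a)" for a :: real
      using L2_P_int[OF indL2] by simp
    have Ieq: "I (Suc n) g y = \<delta> * R * J"
    proof -
      have "I (Suc n) g y = (\<integral>\<theta>. \<delta> * R * (indicator S \<theta> * G n \<theta> y) \<partial>P)"
        by (simp add: I_def g_def mult.assoc)
      also have "\<dots> = \<delta> * R * J" unfolding J_def by simp
      finally show ?thesis .
    qed
    have phiy: "\<phi> y = c * \<sigma> (\<delta> * R * J)" by (simp add: \<phi>_def Gh_def Ieq)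
    have Jf: "\<bar>J - p * f\<bar> \<le> p * (\<delta> * E0 y)"
    proof -
      have "J - p * f = (\<integral>\<theta>. indicator S \<theta> * (G n \<theta> y - f) \<partial>P)"
        using iJ iS[of f] intS[of f] by (simp add: J_def right_diff_distrib Bochner_Integration.integral_diff) metis
      also have "\<bar>\<dots>\<bar> \<le> (\<integral>\<theta>. indicator S \<theta> * (\<delta> * E0 y) \<partial>P)"
      proof (rule abs_int_bound)
        show "integrable P (\<lambda>\<theta>. indicator S \<theta> * (G n \<theta> y - f))"
          using iJ iS[of f] by (simp add: right_diff_distrib)
        show "integrable P (\<lambda>\<theta>. indicator S \<theta> * (\<delta> * E0 y))" by (rule iS)
        fix x assume x: "x \<in> space P"
        show "\<bar>indicator S x * (G n x y - f)\<bar> \<le> indicator S x * (\<delta> * E0 y)"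
        proof (cases "x \<in> S")
          case True
          then have "\<bar>G n x y - f\<bar> \<le> \<delta> * E0 y" unfolding f_def E0_def using y
            by (intro PW[OF g0(1)]) (auto simp: S_def)
          then show ?thesis using True by simp
        qed simp
      qed
      also have "\<dots> = p * (\<delta> * E0 y)" by (rule intS)
      finally show ?thesis .
    qed
    have Jb: "\<bar>J\<bar> \<le> p * B"
    proof -
      have "\<bar>J\<bar> \<le> (\<integral>\<theta>. indicator S \<theta> * B \<partial>P)" unfolding J_def
      proof (rule abs_int_bound)
        show "integrable P (\<lambda>\<theta>. indicator S \<theta> * B)" by (rule iS)
        fix x
        show "\<bar>indicator S x * G n x y\<bar> \<le> indicator S x * B" using G_bound[of n x y]
          by (simp add: indicator_def)
      qed (rule iJ)
      then show ?thesis using intS[of B] by linarith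
    qed
    define z where "z = \<delta> * R * J"
    define u where "u = \<delta> * R * p"
    have upos: "u > 0" using dl ppos Rpos by (simp add: u_def)
    have T1: "\<bar>\<sigma> z - d * z\<bar> \<le> K * z\<^sup>2" unfolding d_def by (rule sig_taylor[OF \<sigma>d \<sigma>0 dL])
    have zb: "\<bar>z\<bar> \<le> u * B"
    proof -
      have "\<bar>z\<bar> = \<delta> * R * \<bar>J\<bar>" using dl Rpos by (simp add: z_def abs_mult)
      also have "\<dots> \<le> \<delta> * R * (p * B)" using dl Rpos Jb by (intro mult_left_mono) auto
      finally show ?thesis by (simp add: u_def mult.assoc)
    qed
    have z2: "z\<^sup>2 \<le> (u * B)\<^sup>2" using zb Bpos upos by (simp add: abs_le_square_iff[symmetric])
    have eq: "\<phi> y - f = (\<sigma> z - d * z) / (u * d) + (J - p * f) / p"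
      using upos ppos dpos dl Rpos unfolding phiy c_def z_def u_def by (simp add: field_simps)
    have A1: "\<bar>(\<sigma> z - d * z) / (u * d)\<bar> \<le> \<delta> * (K * R * B\<^sup>2 / \<bar>d\<bar>)"
    proof -
      have "\<bar>(\<sigma> z - d * z) / (u * d)\<bar> = \<bar>\<sigma> z - d * z\<bar> / (u * \<bar>d\<bar>)" using upos by (simp add: abs_mult)
      also have "\<dots> \<le> K * (u * B)\<^sup>2 / (u * \<bar>d\<bar>)"
        using T1 z2 Kpos upos dpos by (intro divide_right_mono) (auto intro: order_trans mult_left_mono)
      also have "\<dots> = u * (K * B\<^sup>2 / \<bar>d\<bar>)" using upos dpos by (simp add: field_simps power2_eq_square)
      also have "\<dots> \<le> (\<delta> * R) * (K * B\<^sup>2 / \<bar>d\<bar>)"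
        unfolding u_def using ple dl Rpos Kpos dpos
        by (intro mult_right_mono) (auto simp: mult_le_cancel_left1)
      also have "\<dots> = \<delta> * (K * R * B\<^sup>2 / \<bar>d\<bar>)" by simp
      finally show ?thesis .
    qed
    have A2: "\<bar>(J - p * f) / p\<bar> \<le> \<delta> * E0 y"
      using Jf ppos by (simp add: divide_le_eq mult.commute)
    have "\<bar>\<phi> y - f\<bar> \<le> \<delta> * (K * R * B\<^sup>2 / \<bar>d\<bar>) + \<delta> * E0 y" unfolding eq using A1 A2 by linarith
    also have "\<dots> = \<delta> * E y" by (simp add: E_def E0_def algebra_simps)
    finally show ?thesis by (simp add: f_def abs_minus_commute)
  qed
  have "D2 nu0 (Gh n w0 g0) \<phi> \<le> \<delta>\<^sup>2 * (\<integral>y. (E y)\<^sup>2 \<partial>nu0)"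
    by (rule D2_le[OF fL2 phiL2 EL2 pw])
  then have "D2 nu0 (Gh n w0 g0) \<phi> < \<epsilon>" using dl by linarith
  then show "\<exists>\<phi>\<in>lsp (Ideal (Suc n)). D2 nu0 (Gh n w0 g0) \<phi> < \<epsilon>" using phin by blast
qed


end


context rnn
begin

lemma sum_lsp: fixes n :: nat shows "(\<forall>i<n. g i \<in> F) \<Longrightarrow> (\<lambda>x. \<Sum>i<n. c i * g i x) \<in> lsp F"
proof (induction n)
  case 0 then show ?case using lsp.lsp0 by simp
next
  case (Suc n)
  have "(\<lambda>x. c n * g n x + (\<Sum>i<n. c i * g i x)) \<in> lsp F" using Suc by (intro lsp.lspS) auto
  then show ?case by (simp add: add.commute)
qed

lemma Base: assumes f: "f \<in> L2_fun nu0" shows "approx nu0 (Ideal 0) f"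
  unfolding approx_def
proof (intro allI impI)
  fix \<epsilon> :: real assume e: "\<epsilon> > 0"
  obtain m :: nat and c g where g: "\<forall>i<m. g i \<in> {(\<lambda>x. \<sigma> (w \<bullet> x)) | w. True}"
    and d: "L2_dist nu0 f (\<lambda>x. \<Sum>i<m. c i * g i x) < sqrt \<epsilon>"
    using A3 f e unfolding A3b_def span_dense_L2_def by (meson real_sqrt_gt_zero)
  have "g i \<in> Ideal 0" if i: "i < m" for i
  proof -
    obtain w where w: "g i = (\<lambda>x. \<sigma> (w \<bullet> x))" using g i by blast
    have "g i = Gh 0 w (\<lambda>_. 0)" unfolding w by (simp add: Gh_def I_def Phi_def fun_eq_iff)
    moreover have "(\<lambda>_. 0::real) \<in> L2_fun P" by (rule L2_zero)
    moreover have "AE \<theta> in P. \<bar>(\<lambda>_. 0::real) \<theta>\<bar> \<le> R" using Rpos by simp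
    ultimately show ?thesis unfolding Ideal_def by blast
  qed
  then have inl: "(\<lambda>x. \<Sum>i<m. c i * g i x) \<in> lsp (Ideal 0)" by (intro sum_lsp) auto
  have "sqrt (D2 nu0 f (\<lambda>x. \<Sum>i<m. c i * g i x)) < sqrt \<epsilon>" using d by (simp add: L2_dist_def D2_def)
  then have "D2 nu0 f (\<lambda>x. \<Sum>i<m. c i * g i x) < \<epsilon>" by simp
  then show "\<exists>\<phi>\<in>lsp (Ideal 0). D2 nu0 f \<phi> < \<epsilon>" using inl by blast
qed

lemma all_ideal: "f \<in> L2_fun nu0 \<Longrightarrow> approx nu0 (Ideal n) f"
proof (induction n arbitrary: f)
  case 0 then show ?case by (rule Base)
next
  case (Suc n)
  have "\<forall>\<phi>\<in>Ideal n. approx nu0 (Ideal (Suc n)) \<phi>"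
  proof
    fix \<phi> assume "\<phi> \<in> Ideal n"
    then obtain w g where "\<phi> = Gh n w g" "g \<in> L2_fun P" "AE \<theta> in P. \<bar>g \<theta>\<bar> \<le> R" unfolding Ideal_def by blast
    then show "approx nu0 (Ideal (Suc n)) \<phi>" using Step by simp
  qed
  then show ?case using approx_trans[OF Suc.prems Ideal_L2 Ideal_L2 Suc.IH[OF Suc.prems]] by blast
qed

lemma all_actual: "f \<in> L2_fun nu0 \<Longrightarrow> approx nu0 (Actual L) f"
proof -
  assume f: "f \<in> L2_fun nu0"
  have "\<forall>\<phi>\<in>Ideal L. approx nu0 (Actual L) \<phi>"
  proof
    fix \<phi> assume "\<phi> \<in> Ideal L"
    then obtain w g where "\<phi> = Gh L w g" "g \<in> L2_fun P" "AE \<theta> in P. \<bar>g \<theta>\<bar> \<le> R" unfolding Ideal_def by blast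
    then show "approx nu0 (Actual L) \<phi>" using AL by simp
  qed
  then show ?thesis using approx_trans[OF f Ideal_L2 Actual_L2 all_ideal[OF f]] by blast
qed

definition "feat \<theta> = (\<lambda>x. \<sigma> (H_hh P Wxh Whh \<sigma> L x 0 \<theta> + Wxh \<theta> \<bullet> x 0))"

lemma feat_m: "\<theta> \<in> space P \<Longrightarrow> feat \<theta> \<in> borel_measurable (PiM {0..L} (\<lambda>_. borel))"
  unfolding feat_def H_hh_def by measurable

lemma feat_G: "feat \<theta> (Phi y) = G L \<theta> y"
  by (simp add: feat_def G_def H_hh_def)

lemma nuL0_eq: "nu_L0 nu0 T L = distr nu0 (PiM {0..L} (\<lambda>_. borel)) Phi"
  unfolding nu_L0_def Phi_def by simp

lemma main: "span_dense_L2 (nu_L0 nu0 T L) {feat \<theta> | \<theta>. \<theta> \<in> space P}"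
proof -
  let ?PM = "PiM {0..L} (\<lambda>_. borel) :: (nat \<Rightarrow> 'a) measure"
  let ?M = "distr nu0 ?PM Phi"
  interpret M: prob_space ?M by (rule N.prob_space_distr[OF Phi_m])
  have bmM: "borel_measurable ?M = borel_measurable ?PM" by (rule measurable_cong_sets) simp_all
  have sub: "{feat \<theta> | \<theta>. \<theta> \<in> space P} \<subseteq> L2_fun ?M"
  proof
    fix h assume "h \<in> {feat \<theta> | \<theta>. \<theta> \<in> space P}"
    then obtain \<theta> where th: "\<theta> \<in> space P" "h = feat \<theta>" by blast
    have m: "h \<in> borel_measurable ?M" using feat_m[OF th(1)] th(2) bmM by simp
    have "\<And>x. (h x)\<^sup>2 \<le> B\<^sup>2" using \<sigma>B unfolding th(2) feat_def
      by (metis abs_le_square_iff abs_of_pos Bpos power2_abs)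
    then have "integrable ?M (\<lambda>x. (h x)\<^sup>2)"
      using m by (intro M.integrable_const_bound[where B="B\<^sup>2"]) auto
    then show "h \<in> L2_fun ?M" using m by (simp add: L2_fun_def)
  qed
  have dense: "\<exists>n::nat. \<exists>c::nat \<Rightarrow> real. \<exists>g::nat \<Rightarrow> (nat \<Rightarrow> 'a) \<Rightarrow> real.
        (\<forall>i<n. g i \<in> {feat \<theta> | \<theta>. \<theta> \<in> space P}) \<and> L2_dist ?M f (\<lambda>x. \<Sum>i<n. c i * g i x) < \<epsilon>"
    if f: "f \<in> L2_fun ?M" and e: "\<epsilon> > 0" for f \<epsilon>
  proof -
    have fm: "f \<in> borel_measurable ?PM" using f bmM by (simp add: L2_fun_def)
    have fP: "(\<lambda>y. f (Phi y)) \<in> L2_fun nu0"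
      using f fm integrable_distr_eq[OF Phi_m, of "\<lambda>x. (f x)\<^sup>2"] by (simp add: L2_fun_def measurable_comp[OF Phi_m])
    obtain \<phi> where phi: "\<phi> \<in> lsp (Actual L)" "D2 nu0 (\<lambda>y. f (Phi y)) \<phi> < \<epsilon>\<^sup>2"
      using all_actual[OF fP] e unfolding approx_def by (meson zero_less_power)
    obtain n :: nat and c g' where g': "\<forall>i<n. g' i \<in> Actual L" "\<phi> = (\<lambda>y. \<Sum>i<n. c i * g' i y)"
      using lsp_sum[OF phi(1)] by blast
    define th where "th i = (SOME \<theta>. \<theta> \<in> space P \<and> g' i = G L \<theta>)" for i
    have th: "th i \<in> space P \<and> g' i = G L (th i)" if "i < n" for i
    proof -
      have "\<exists>\<theta>. \<theta> \<in> space P \<and> g' i = G L \<theta>" using g'(1) that unfolding Actual_def by blast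
      then show ?thesis unfolding th_def by (rule someI_ex)
    qed
    define g where "g i = feat (th i)" for i
    have gin: "\<forall>i<n. g i \<in> {feat \<theta> | \<theta>. \<theta> \<in> space P}" using th unfolding g_def by blast
    have gm: "\<And>i. i < n \<Longrightarrow> g i \<in> borel_measurable ?PM" using th feat_m unfolding g_def by blast
    have geq: "(\<Sum>i<n. c i * g i (Phi y)) = \<phi> y" for y
      using th unfolding g'(2) g_def by (intro sum.cong) (auto simp: feat_G)
    have "L2_dist ?M f (\<lambda>x. \<Sum>i<n. c i * g i x) = sqrt (\<integral>y. (f (Phi y) - (\<Sum>i<n. c i * g i (Phi y)))\<^sup>2 \<partial>nu0)"
      unfolding L2_dist_def using fm gm by (subst integral_distr[OF Phi_m]) auto
    also have "\<dots> = sqrt (D2 nu0 (\<lambda>y. f (Phi y)) \<phi>)" by (simp add: D2_def geq)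
    also have "\<dots> < sqrt (\<epsilon>\<^sup>2)" using phi(2) by (rule real_sqrt_less_mono)
    also have "\<dots> = \<epsilon>" using e by simp
    finally show ?thesis using gin by blast
  qed
  show ?thesis unfolding span_dense_L2_def nuL0_eq
  proof (intro conjI ballI allI impI)
    show "{feat \<theta> | \<theta>. \<theta> \<in> space P} \<subseteq> L2_fun ?M" by (rule sub)
    fix f and \<epsilon> :: real assume "f \<in> L2_fun ?M" "\<epsilon> > 0"
    then show "\<exists>n::nat. \<exists>c::nat \<Rightarrow> real. \<exists>g::nat \<Rightarrow> (nat \<Rightarrow> 'a) \<Rightarrow> real.
        (\<forall>i<n. g i \<in> {feat \<theta> | \<theta>. \<theta> \<in> space P}) \<and> L2_dist ?M f (\<lambda>x. \<Sum>i<n. c i * g i x) < \<epsilon>"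
      by (rule dense)
  qed
qed

end


theorem mainTheorem6:
  fixes L :: nat and t R :: real
    and T :: "'a::euclidean_space \<Rightarrow> 'a" and nu0 :: "'a measure"
    and P :: "'b measure" and Wxh :: "'b \<Rightarrow> 'a" and Whh :: "'b \<Rightarrow> 'b \<Rightarrow> real"
    and \<sigma> :: "real \<Rightarrow> real"
  assumes "L > 0" and "t \<ge> 0" and "R > 0"
    and "continuous_on UNIV T"
    and "prob_space nu0" and "sets nu0 = sets borel"
    and "uniquely_ergodic T nu0"
    and "integrable nu0 (\<lambda>x. norm x ^ 4)"
    and "A3a R \<sigma>" and "A3b \<sigma> nu0"
    and "prob_space P"
    and "Wxh \<in> borel_measurable P"
    and "(\<lambda>(\<theta>, \<theta>'). Whh \<theta> \<theta>') \<in> borel_measurable (P \<Otimes>\<^sub>M P)"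
    and "\<forall>\<theta> \<in> space P. (\<lambda>\<theta>'. Whh \<theta>' \<theta>) \<in> L2_fun P \<and> Whh \<theta> \<in> L2_fun P"
    and "full_support R P Wxh Whh"
  shows "span_dense_L2 (nu_L0 nu0 T L)
           {(\<lambda>x. \<sigma> (H_hh P Wxh Whh \<sigma> L x 0 \<theta> + Wxh \<theta> \<bullet> x 0)) | \<theta>. \<theta> \<in> space P}"
proof -
  note as = assms
  interpret N0: prob_space nu0 by (rule as(5))
  obtain K where K: "K > R" "bounded (range \<sigma>)" "\<forall>z. \<sigma> differentiable (at z)" "\<sigma> 0 = 0"
    "deriv \<sigma> 0 \<noteq> 0" "\<forall>z. \<bar>deriv \<sigma> z\<bar> \<le> K" "\<forall>y z. \<bar>deriv \<sigma> y - deriv \<sigma> z\<bar> \<le> K * \<bar>y - z\<bar>"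
    using as(9) unfolding A3a_def by blast
  obtain a where a: "\<forall>x\<in>range \<sigma>. norm x \<le> a" using K(2) bounded_iff by blast
  define B where "B = max a 1"
  have B: "B > 0" "\<And>z. \<bar>\<sigma> z\<bar> \<le> B" using a by (auto simp: B_def intro: le_max_iff_disj[THEN iffD2])
  have Tm: "T \<in> borel_measurable borel" using as(4) by (rule borel_measurable_continuous_onI)
  have Tinv: "distr nu0 borel T = nu0" using as(7) unfolding uniquely_ergodic_def by blast
  have nm: "(\<lambda>x::'a. norm x ^ 2) \<in> borel_measurable nu0"
    by (subst measurable_cong_sets[OF as(6) refl]) measurable
  have mom: "integrable nu0 (\<lambda>x. norm x ^ 2)"
  proof (rule Bochner_Integration.integrable_bound)
    show "integrable nu0 (\<lambda>x. 1 + norm x ^ 4)"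
      using as(8) N0.integrable_const by (intro Bochner_Integration.integrable_add) auto
    show "(\<lambda>x::'a. norm x ^ 2) \<in> borel_measurable nu0" by (rule nm)
    show "AE x in nu0. norm (norm x ^ 2) \<le> norm (1 + norm x ^ 4)"
    proof (intro AE_I2)
      fix x :: 'a
      have q: "u \<le> 1 + u\<^sup>2" if u0: "u \<ge> 0" for u :: real
      proof -
        have "(u - 1)\<^sup>2 = u\<^sup>2 - 2 * u + 1" by (simp add: power2_diff)
        moreover have "0 \<le> (u - 1)\<^sup>2" by simp
        ultimately show ?thesis using u0 by linarith
      qed
      have u4: "norm x ^ 4 = (norm x ^ 2)\<^sup>2" by (simp flip: power_mult)
      have "norm x ^ 2 \<le> 1 + norm x ^ 4" unfolding u4 by (rule q) simp
      then show "norm (norm x ^ 2) \<le> norm (1 + norm x ^ 4)" by simp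
    qed
  qed
  interpret rnn nu0 P L R K B T Wxh Whh \<sigma>
    by (intro rnn.intro rnn_axioms.intro) (fact+)
  have "{(\<lambda>x. \<sigma> (H_hh P Wxh Whh \<sigma> L x 0 \<theta> + Wxh \<theta> \<bullet> x 0)) | \<theta>. \<theta> \<in> space P} = {feat \<theta> | \<theta>. \<theta> \<in> space P}"
    by (simp add: feat_def)
  then show ?thesis using main by simp
qed

end
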